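(* Let $P$ be the path $u,w,v$ of length 2, let $m\ge 3$, and let $L$ be an $m$-assignment for $P$. For $c\in L(u)$ and $d\in L(v)$ let $N(c,d)$ be the number of proper $L$-colorings of $P$ in which $u$ is colored $c$ and $v$ is colored $d$. Let $a=|L(u)\cap L(v)|$. Then: (i) for each $c\in L(u)$ and $d\in L(v)$, $m-2\le N(c,d)\le m$; (ii) the number of ordered pairs $(c,d)\in L(u)\times L(v)$ with $N(c,d)=m-2$ is at most $\frac{(a+m)^2}{4}-a$.
   Context: An $m$-assignment $L$ assigns to each vertex $x$ a set $L(x)$ of $m$ colors; a proper $L$-coloring is a proper coloring $f$ with $f(x)\in L(x)$ for every vertex $x$. *)

theory Defs
  imports Complex_Main "HOL-Library.FuncSet"
begin

definition m_assignment :: "'v set \<Rightarrow> ('v \<Rightarrow> 'c set) \<Rightarrow> nat \<Rightarrow> bool" where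
  "m_assignment V L m \<longleftrightarrow> (\<forall>x\<in>V. finite (L x) \<and> card (L x) = m)"

definition proper_L_coloring ::
  "'v set \<Rightarrow> ('v \<Rightarrow> 'v \<Rightarrow> bool) \<Rightarrow> ('v \<Rightarrow> 'c set) \<Rightarrow> ('v \<Rightarrow> 'c) \<Rightarrow> bool" where
  "proper_L_coloring V E L f \<longleftrightarrow>
     (\<forall>x\<in>V. f x \<in> L x) \<and> (\<forall>x\<in>V. \<forall>y\<in>V. E x y \<longrightarrow> f x \<noteq> f y)"

definition path3_edge :: "'v \<Rightarrow> 'v \<Rightarrow> 'v \<Rightarrow> 'v \<Rightarrow> 'v \<Rightarrow> bool" where
  "path3_edge u w v x y \<longleftrightarrow> {x, y} = {u, w} \<or> {x, y} = {w, v}"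

definition Ncount :: "'v \<Rightarrow> 'v \<Rightarrow> 'v \<Rightarrow> ('v \<Rightarrow> 'c set) \<Rightarrow> 'c \<Rightarrow> 'c \<Rightarrow> nat" where
  "Ncount u w v L c d = card {f \<in> extensional {u, w, v}.
      proper_L_coloring {u, w, v} (path3_edge u w v) L f \<and> f u = c \<and> f v = d}"

end

theory Submission
  imports Defs
begin

lemma Ncount_eq:
  assumes dist: "distinct [u, w, v]" and c: "c \<in> L u" and d: "d \<in> L v"
  shows "Ncount u w v L c d = card (L w - {c, d})"
proof -
  define g where "g = (\<lambda>x. (\<lambda>y. if y = u then c else if y = w then x else if y = v then d else undefined))"
  have E: "\<And>x y. x \<in> {u,w,v} \<Longrightarrow> y \<in> {u,w,v} \<Longrightarrow> path3_edge u w v x y \<longleftrightarrow>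
     (x = u \<and> y = w) \<or> (x = w \<and> y = u) \<or> (x = w \<and> y = v) \<or> (x = v \<and> y = w)"
    using dist unfolding path3_edge_def by (auto simp: doubleton_eq_iff)
  have S: "{f \<in> extensional {u, w, v}.
      proper_L_coloring {u, w, v} (path3_edge u w v) L f \<and> f u = c \<and> f v = d} = g ` (L w - {c, d})"
  proof (rule set_eqI, rule iffI)
    fix f assume f: "f \<in> {f \<in> extensional {u, w, v}.
      proper_L_coloring {u, w, v} (path3_edge u w v) L f \<and> f u = c \<and> f v = d}"
    then have fe: "f \<in> extensional {u,w,v}" and pr: "proper_L_coloring {u, w, v} (path3_edge u w v) L f"
      and fu: "f u = c" and fv: "f v = d" by auto
    have "E1": "path3_edge u w v u w" "path3_edge u w v w v" using E by auto
    have "f w \<in> L w" "f u \<noteq> f w" "f w \<noteq> f v" using pr E1 unfolding proper_L_coloring_def by auto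
    hence fw: "f w \<in> L w - {c,d}" using fu fv by auto
    have "f = g (f w)"
    proof
      fix y show "f y = g (f w) y" using fe fu fv dist unfolding g_def extensional_def by auto
    qed
    thus "f \<in> g ` (L w - {c, d})" using fw by blast
  next
    fix f assume "f \<in> g ` (L w - {c, d})"
    then obtain x where x: "x \<in> L w - {c,d}" and f: "f = g x" by blast
    have "f \<in> extensional {u,w,v}" unfolding f g_def extensional_def by auto
    moreover have "f u = c" "f v = d" "f w = x" using dist unfolding f g_def by auto
    moreover have "proper_L_coloring {u, w, v} (path3_edge u w v) L f"
      unfolding proper_L_coloring_def
    proof (intro conjI ballI impI)
      fix y assume "y \<in> {u,w,v}" thus "f y \<in> L y" using \<open>f u = c\<close> \<open>f v = d\<close> \<open>f w = x\<close> x c d by auto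
    next
      fix y z assume "y \<in> {u,w,v}" "z \<in> {u,w,v}" "path3_edge u w v y z"
      thus "f y \<noteq> f z" using E[of y z] \<open>f u = c\<close> \<open>f v = d\<close> \<open>f w = x\<close> x by auto
    qed
    ultimately show "f \<in> {f \<in> extensional {u, w, v}.
      proper_L_coloring {u, w, v} (path3_edge u w v) L f \<and> f u = c \<and> f v = d}" by auto
  qed
  have "inj_on g (L w - {c, d})"
  proof (rule inj_onI)
    fix x y assume "g x = g y"
    hence "g x w = g y w" by simp
    thus "x = y" using dist unfolding g_def by auto
  qed
  thus ?thesis unfolding Ncount_def S by (simp add: card_image)
qed

lemma card_diff2:
  assumes "finite A"
  shows "card (A - {c, d}) = card A - card (A \<inter> {c, d})"
    "card (A \<inter> {c, d}) \<le> 2"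
    "card (A \<inter> {c, d}) = 2 \<longleftrightarrow> c \<noteq> d \<and> c \<in> A \<and> d \<in> A"
proof -
  show "card (A - {c, d}) = card A - card (A \<inter> {c, d})"
    using assms by (simp add: card_Diff_subset_Int)
  show "card (A \<inter> {c, d}) \<le> 2"
  proof -
    have "card (A \<inter> {c, d}) \<le> card {c, d}" by (intro card_mono) auto
    also have "\<dots> \<le> 2" by (simp add: card_insert_if)
    finally show ?thesis .
  qed
  show "card (A \<inter> {c, d}) = 2 \<longleftrightarrow> c \<noteq> d \<and> c \<in> A \<and> d \<in> A"
    by (cases "c \<in> A"; cases "d \<in> A"; cases "c = d") (auto simp: Int_insert_right)
qed

lemma real_ineq:
  fixes x y z a m :: real
  assumes "z \<le> a" "x + y \<le> m + z" "0 \<le> x" "0 \<le> y" "0 \<le> z" "m \<ge> 3"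
  shows "x * y - z \<le> (a + m)^2 / 4 - a"
proof -
  have "x * y \<le> (x + y)^2 / 4" using sum_squares_ge_zero[of "x - y" 0]
    by (simp add: power2_eq_square algebra_simps)
  also have "\<dots> \<le> (m + z)^2 / 4" using assms by (intro divide_right_mono power_mono) auto
  also have "(m + z)^2 / 4 - z \<le> (a + m)^2 / 4 - a"
  proof -
    have "(a + m)^2 - (m + z)^2 = (a - z) * (a + z + 2 * m)" by (simp add: power2_eq_square algebra_simps)
    also have "\<dots> \<ge> (a - z) * 4" using assms by (intro mult_left_mono) auto
    finally show ?thesis by simp
  qed
  ultimately show ?thesis by linarith
qed

theorem lemma19:
  fixes u w v :: 'v and L :: "'v \<Rightarrow> 'c set" and m :: nat
  assumes "distinct [u, w, v]"
    and "m \<ge> 3"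
    and "m_assignment {u, w, v} L m"
  defines "a \<equiv> card (L u \<inter> L v)"
  shows "(\<forall>c\<in>L u. \<forall>d\<in>L v. m - 2 \<le> Ncount u w v L c d \<and> Ncount u w v L c d \<le> m)
    \<and> real (card {(c, d) \<in> L u \<times> L v. Ncount u w v L c d = m - 2})
        \<le> (real a + real m)^2 / 4 - real a"
proof -
  have fin: "finite (L u)" "finite (L v)" "finite (L w)" and cw: "card (L w) = m"
    and cu: "card (L u) = m" and cv: "card (L v) = m"
    using assms(3) unfolding m_assignment_def by auto
  have N: "Ncount u w v L c d = m - card (L w \<inter> {c, d})" if "c \<in> L u" "d \<in> L v" for c d
    using Ncount_eq[OF assms(1) that] card_diff2(1)[OF fin(3)] cw by simp
  have part1: "\<forall>c\<in>L u. \<forall>d\<in>L v. m - 2 \<le> Ncount u w v L c d \<and> Ncount u w v L c d \<le> m"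
  proof (intro ballI conjI)
    fix c d assume cd: "c \<in> L u" "d \<in> L v"
    have "card (L w \<inter> {c, d}) \<le> 2" by (rule card_diff2(2)[OF fin(3)])
    thus "m - 2 \<le> Ncount u w v L c d" "Ncount u w v L c d \<le> m" unfolding N[OF cd] by auto
  qed
  define X where "X = L u \<inter> L w"
  define Y where "Y = L v \<inter> L w"
  have setq: "{(c, d) \<in> L u \<times> L v. Ncount u w v L c d = m - 2} = X \<times> Y - (\<lambda>z. (z, z)) ` (X \<inter> Y)"
  proof -
    have "Ncount u w v L c d = m - 2 \<longleftrightarrow> c \<noteq> d \<and> c \<in> L w \<and> d \<in> L w"
      if "c \<in> L u" "d \<in> L v" for c d
    proof -
      have "card (L w \<inter> {c, d}) \<le> 2" by (rule card_diff2(2)[OF fin(3)])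
      hence "m - card (L w \<inter> {c, d}) = m - 2 \<longleftrightarrow> card (L w \<inter> {c, d}) = 2" using assms(2) by auto
      thus ?thesis using N[OF that] card_diff2(3)[OF fin(3)] by simp
    qed
    thus ?thesis unfolding X_def Y_def by auto
  qed
  have fX: "finite X" "finite Y" using fin unfolding X_def Y_def by auto
  have "card (X \<times> Y - (\<lambda>z. (z, z)) ` (X \<inter> Y)) = card X * card Y - card (X \<inter> Y)"
  proof -
    have "card ((\<lambda>z. (z, z)) ` (X \<inter> Y)) = card (X \<inter> Y)" by (simp add: card_image inj_on_def)
    moreover have "(\<lambda>z. (z, z)) ` (X \<inter> Y) \<subseteq> X \<times> Y" by auto
    ultimately show ?thesis using fX by (simp add: card_Diff_subset card_cartesian_product finite_subset)
  qed
  moreover have "card (X \<inter> Y) \<le> card X * card Y"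
  proof -
    have "card ((\<lambda>z. (z, z)) ` (X \<inter> Y)) = card (X \<inter> Y)" by (simp add: card_image inj_on_def)
    moreover have "card ((\<lambda>z. (z, z)) ` (X \<inter> Y)) \<le> card (X \<times> Y)"
      using fX by (intro card_mono) auto
    ultimately show ?thesis by (simp add: card_cartesian_product)
  qed
  ultimately have cr: "real (card {(c, d) \<in> L u \<times> L v. Ncount u w v L c d = m - 2})
     = real (card X) * real (card Y) - real (card (X \<inter> Y))" unfolding setq by (simp add: of_nat_diff)
  have za: "card (X \<inter> Y) \<le> a" unfolding a_def X_def Y_def using fin by (intro card_mono) auto
  have "card X + card Y = card (X \<union> Y) + card (X \<inter> Y)" using fX card_Un_Int by blast
  moreover have "card (X \<union> Y) \<le> m" proof -
    have "X \<union> Y \<subseteq> L w" unfolding X_def Y_def by auto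
    thus ?thesis using cw fin(3) card_mono by metis
  qed
  ultimately have "card X + card Y \<le> m + card (X \<inter> Y)" by linarith
  hence "real (card X) * real (card Y) - real (card (X \<inter> Y)) \<le> (real a + real m)^2 / 4 - real a"
    using za assms(2) by (intro real_ineq) auto
  with part1 cr show ?thesis by simp
qed

end
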